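(* Let $F\subseteq P_{3,4}$ be an exposed face defined by a linear functional $L:H_4\to\mathbb R$ that is nonnegative on $P_{3,4}$ with $F=\ker L\cap P_{3,4}$. Let $B_L:H_2\times H_2\to\mathbb R$, $B_L(f,g)=L(fg)$ (a positive semidefinite symmetric bilinear form), and $\ker B_L=\{f\in H_2: B_L(f,g)=0\ \forall g\in H_2\}$. Then $\ker B_L=J_F$.
   Context: $H_k\subseteq\mathbb R[x,y,z]$: real ternary forms of degree $k$; $P_{3,4}=\{f\in H_4: f\ge0\text{ on }\mathbb P^2(\mathbb R)\}$. A face of $P_{3,4}$ is a convex subcone $F$ such that $a,b\in P_{3,4}$, $a+b\in F$ imply $a,b\in F$; it is exposed if $F=\ker L\cap P_{3,4}$ for a linear functional $L$ nonnegative on $P_{3,4}$. $J_F=\{q\in H_2: q^2\in F\}$. *)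

theory Defs
  imports "HOL-Analysis.Analysis"
begin

text \<open>Real ternary forms are represented by their polynomial functions
  R x R x R -> R (a real polynomial is determined by its function).\<close>

type_synonym form = "real \<Rightarrow> real \<Rightarrow> real \<Rightarrow> real"

definition H :: "nat \<Rightarrow> form set" where
  "H k = {f. \<exists>c :: nat \<Rightarrow> nat \<Rightarrow> real.
      f = (\<lambda>x y z. \<Sum>i\<le>k. \<Sum>j\<le>k - i. c i j * x ^ i * y ^ j * z ^ (k - i - j))}"

definition P34 :: "form set" where
  "P34 = {f \<in> H 4. \<forall>x y z. (x, y, z) \<noteq> (0, 0, 0) \<longrightarrow> 0 \<le> f x y z}"

definition linear_on_H4 :: "(form \<Rightarrow> real) \<Rightarrow> bool" where
  "linear_on_H4 L \<longleftrightarrow>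
     (\<forall>f \<in> H 4. \<forall>g \<in> H 4. L (\<lambda>x y z. f x y z + g x y z) = L f + L g) \<and>
     (\<forall>f \<in> H 4. \<forall>a::real. L (\<lambda>x y z. a * f x y z) = a * L f)"

definition face_of_functional :: "(form \<Rightarrow> real) \<Rightarrow> form set" where
  "face_of_functional L = {f \<in> P34. L f = 0}"

definition J :: "form set \<Rightarrow> form set" where
  "J F = {q \<in> H 2. (\<lambda>x y z. (q x y z) ^ 2) \<in> F}"

definition B :: "(form \<Rightarrow> real) \<Rightarrow> form \<Rightarrow> form \<Rightarrow> real" where
  "B L f g = L (\<lambda>x y z. f x y z * g x y z)"

definition kerB :: "(form \<Rightarrow> real) \<Rightarrow> form set" where
  "kerB L = {f \<in> H 2. \<forall>g \<in> H 2. B L f g = 0}"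

end

theory Submission
  imports Defs
begin

lemma H_add: "f \<in> H k \<Longrightarrow> g \<in> H k \<Longrightarrow> (\<lambda>x y z. f x y z + g x y z) \<in> H k"
proof -
  assume "f \<in> H k" "g \<in> H k"
  then obtain c d where c: "f = (\<lambda>x y z. \<Sum>i\<le>k. \<Sum>j\<le>k - i. c i j * x ^ i * y ^ j * z ^ (k - i - j))"
    and d: "g = (\<lambda>x y z. \<Sum>i\<le>k. \<Sum>j\<le>k - i. d i j * x ^ i * y ^ j * z ^ (k - i - j))"
    unfolding H_def by blast
  show ?thesis unfolding H_def
    by (rule CollectI, rule exI[of _ "\<lambda>i j. c i j + d i j"])
      (simp add: c d distrib_right sum.distrib)
qed

lemma H_smult: "f \<in> H k \<Longrightarrow> (\<lambda>x y z. a * f x y z) \<in> H k"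
proof -
  assume "f \<in> H k"
  then obtain c where c: "f = (\<lambda>x y z. \<Sum>i\<le>k. \<Sum>j\<le>k - i. c i j * x ^ i * y ^ j * z ^ (k - i - j))"
    unfolding H_def by blast
  show ?thesis unfolding H_def
    by (rule CollectI, rule exI[of _ "\<lambda>i j. a * c i j"])
      (simp add: c sum_distrib_left mult.assoc)
qed

lemma H_zero: "(\<lambda>x y z. 0) \<in> H k"
  unfolding H_def by (rule CollectI, rule exI[of _ "\<lambda>i j. 0"]) simp

lemma H_sum: "finite S \<Longrightarrow> (\<And>s. s \<in> S \<Longrightarrow> f s \<in> H k) \<Longrightarrow> (\<lambda>x y z. \<Sum>s\<in>S. f s x y z) \<in> H k"
proof (induction S rule: finite_induct)
  case empty
  then show ?case using H_zero by simp
next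
  case (insert a S)
  have e: "(\<lambda>x y z. \<Sum>s\<in>insert a S. f s x y z) = (\<lambda>x y z. f a x y z + (\<lambda>x y z. \<Sum>s\<in>S. f s x y z) x y z)"
    using insert(1,2) by simp
  have "f a \<in> H k" "(\<lambda>x y z. \<Sum>s\<in>S. f s x y z) \<in> H k" using insert(3,4) by auto
  from H_add[OF this] show ?case unfolding e .
qed

lemma H_mono: "i + j \<le> k \<Longrightarrow> (\<lambda>x y z. x ^ i * y ^ j * z ^ (k - i - j)) \<in> H k"
proof -
  assume ij: "i + j \<le> k"
  define c where "c = (\<lambda>a b. if a = i \<and> b = j then (1::real) else 0)"
  have "(\<lambda>x y z. \<Sum>a\<le>k. \<Sum>b\<le>k - a. c a b * x ^ a * y ^ b * z ^ (k - a - b))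
        = (\<lambda>x y z. x ^ i * y ^ j * z ^ (k - i - j))"
  proof (intro ext)
    fix x y z :: real
    have "(\<Sum>a\<le>k. \<Sum>b\<le>k - a. c a b * x ^ a * y ^ b * z ^ (k - a - b))
        = (\<Sum>a\<le>k. if a = i then x ^ i * y ^ j * z ^ (k - i - j) else 0)"
    proof (rule sum.cong[OF refl])
      fix a assume "a \<in> {..k}"
      show "(\<Sum>b\<le>k - a. c a b * x ^ a * y ^ b * z ^ (k - a - b))
          = (if a = i then x ^ i * y ^ j * z ^ (k - i - j) else 0)"
      proof -
        have "(\<Sum>b\<le>k - a. c a b * x ^ a * y ^ b * z ^ (k - a - b))
          = (\<Sum>b\<le>k - a. if b = j then (if a = i then x ^ i * y ^ j * z ^ (k - i - j) else 0) else 0)"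
          by (rule sum.cong[OF refl]) (auto simp: c_def)
        also have "\<dots> = (if a = i then x ^ i * y ^ j * z ^ (k - i - j) else 0)"
          using ij by (auto simp: sum.delta intro: le_diff_conv2[THEN iffD2])
        finally show ?thesis .
      qed
    qed
    also have "\<dots> = x ^ i * y ^ j * z ^ (k - i - j)" using ij by simp
    finally show "(\<Sum>a\<le>k. \<Sum>b\<le>k - a. c a b * x ^ a * y ^ b * z ^ (k - a - b))
        = x ^ i * y ^ j * z ^ (k - i - j)" .
  qed
  then show ?thesis unfolding H_def by (intro CollectI exI[of _ c]) (rule sym)
qed

lemma dd: "(\<Sum>i\<in>A. \<Sum>j\<in>BB i. f i j) * (G::real) = (\<Sum>i\<in>A. \<Sum>j\<in>BB i. f i j * G)"
  by (simp add: sum_distrib_right)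
lemma dd2: "(F::real) * (\<Sum>k\<in>C. \<Sum>l\<in>DD k. g k l) = (\<Sum>k\<in>C. \<Sum>l\<in>DD k. F * g k l)"
  by (simp add: sum_distrib_left)
lemma ddd: "(\<Sum>i\<in>A. \<Sum>j\<in>BB i. f i j) * (\<Sum>k\<in>C. \<Sum>l\<in>DD k. g k l) = (\<Sum>i\<in>A. \<Sum>j\<in>BB i. \<Sum>k\<in>C. \<Sum>l\<in>DD k. (f i j * g k l :: real))"
  unfolding dd by (subst dd2) (rule refl)

lemma H_mult: "f \<in> H m \<Longrightarrow> g \<in> H n \<Longrightarrow> (\<lambda>x y z. f x y z * g x y z) \<in> H (m + n)"
proof -
  assume "f \<in> H m" "g \<in> H n"
  then obtain c d where c: "f = (\<lambda>x y z. \<Sum>i\<le>m. \<Sum>j\<le>m - i. c i j * x ^ i * y ^ j * z ^ (m - i - j))"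
    and d: "g = (\<lambda>x y z. \<Sum>i\<le>n. \<Sum>j\<le>n - i. d i j * x ^ i * y ^ j * z ^ (n - i - j))"
    unfolding H_def by blast
  have tm: "(\<lambda>x y z. (c i j * x ^ i * y ^ j * z ^ (m - i - j)) * (d i' j' * x ^ i' * y ^ j' * z ^ (n - i' - j')))
      \<in> H (m + n)" if "i \<le> m" "j \<le> m - i" "i' \<le> n" "j' \<le> n - i'" for i j i' j'
  proof -
    have e: "(m - i - j) + (n - i' - j') = m + n - (i + i') - (j + j')" using that by simp
    have "(\<lambda>x y z. (c i j * x ^ i * y ^ j * z ^ (m - i - j)) * (d i' j' * x ^ i' * y ^ j' * z ^ (n - i' - j')))
       = (\<lambda>x y z. (c i j * d i' j') * (x ^ (i + i') * y ^ (j + j') * z ^ (m + n - (i + i') - (j + j'))))"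
    proof (intro ext)
      fix x y z :: real
      have "(c i j * x ^ i * y ^ j * z ^ (m - i - j)) * (d i' j' * x ^ i' * y ^ j' * z ^ (n - i' - j'))
        = (c i j * d i' j') * ((x ^ i * x ^ i') * (y ^ j * y ^ j') * (z ^ (m - i - j) * z ^ (n - i' - j')))"
        by (simp only: mult_ac)
      also have "\<dots> = (c i j * d i' j') * (x ^ (i + i') * y ^ (j + j') * z ^ (m + n - (i + i') - (j + j')))"
        unfolding power_add[symmetric] e ..
      finally show "(c i j * x ^ i * y ^ j * z ^ (m - i - j)) * (d i' j' * x ^ i' * y ^ j' * z ^ (n - i' - j'))
        = (c i j * d i' j') * (x ^ (i + i') * y ^ (j + j') * z ^ (m + n - (i + i') - (j + j')))" .
    qed
    moreover have "(\<lambda>x y z. x ^ (i + i') * y ^ (j + j') * z ^ (m + n - (i + i') - (j + j'))) \<in> H (m + n)"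
      using that by (intro H_mono) simp
    ultimately show ?thesis using H_smult[of _ "m + n" "c i j * d i' j'"] by simp
  qed
  have eq: "(\<lambda>x y z. f x y z * g x y z) = (\<lambda>x y z. \<Sum>i\<le>m. \<Sum>j\<le>m - i. \<Sum>i'\<le>n. \<Sum>j'\<le>n - i'.
      (c i j * x ^ i * y ^ j * z ^ (m - i - j)) * (d i' j' * x ^ i' * y ^ j' * z ^ (n - i' - j')))"
    unfolding c d by (subst ddd) (rule refl)
  show ?thesis unfolding eq
    apply (rule H_sum, simp)+
    apply (rule tm)
       apply auto
    done
qed

theorem mainTheorem16:
  fixes L :: "form \<Rightarrow> real" and F :: "form set"
  assumes "linear_on_H4 L"
    and "\<forall>f \<in> P34. 0 \<le> L f"
    and "F = face_of_functional L"
  shows "kerB L = J F"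
proof -
  have add: "\<And>f g. f \<in> H 4 \<Longrightarrow> g \<in> H 4 \<Longrightarrow> L (\<lambda>x y z. f x y z + g x y z) = L f + L g"
    and sm: "\<And>f a. f \<in> H 4 \<Longrightarrow> L (\<lambda>x y z. a * f x y z) = a * L f"
    using assms(1) unfolding linear_on_H4_def by auto
  have sqP: "(\<lambda>x y z. (q x y z)^2) \<in> P34" if "q \<in> H 2" for q
  proof -
    have "(\<lambda>x y z. q x y z * q x y z) \<in> H 4" using H_mult[OF that that] by simp
    then show ?thesis unfolding P34_def by (simp add: power2_eq_square)
  qed
  have prod: "(\<lambda>x y z. q x y z * g x y z) \<in> H 4" if "q \<in> H 2" "g \<in> H 2" for q g
    using H_mult[OF that] by simp
  show ?thesis
  proof (intro set_eqI iffI)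
    fix q assume "q \<in> kerB L"
    then have q: "q \<in> H 2" "B L q q = 0" unfolding kerB_def by auto
    then show "q \<in> J F" using sqP[OF q(1)]
      unfolding J_def assms(3) face_of_functional_def B_def by (simp add: power2_eq_square)
  next
    fix q assume "q \<in> J F"
    then have q: "q \<in> H 2" "L (\<lambda>x y z. (q x y z)^2) = 0"
      unfolding J_def assms(3) face_of_functional_def by auto
    show "q \<in> kerB L" unfolding kerB_def B_def
    proof (intro CollectI conjI ballI q(1))
      fix g assume g: "g \<in> H 2"
      define a where "a = L (\<lambda>x y z. g x y z * g x y z)"
      define b where "b = L (\<lambda>x y z. q x y z * g x y z)"
      have a0: "a \<ge> 0" using assms(2) sqP[OF g] unfolding a_def by (simp add: power2_eq_square)
      define s where "s = b / (a + 1)"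
      define h where "h = (\<lambda>x y z. q x y z - s * g x y z)"
      have hH: "h \<in> H 2" unfolding h_def using H_add[OF q(1) H_smult[OF g, of "-s"]] by simp
      define P0 where "P0 = (\<lambda>x y z. (q x y z)^2)"
      define Q where "Q = (\<lambda>x y z. (- 2 * s) * (q x y z * g x y z))"
      define R where "R = (\<lambda>x y z. (s^2) * (g x y z * g x y z))"
      have P0H: "P0 \<in> H 4" using sqP[OF q(1)] unfolding P0_def P34_def by simp
      have QH: "Q \<in> H 4" unfolding Q_def by (rule H_smult, rule prod; fact)
      have RH: "R \<in> H 4" unfolding R_def by (rule H_smult, rule prod; fact)
      have "0 \<le> L (\<lambda>x y z. (h x y z)^2)" using assms(2) sqP[OF hH] by blast
      also have "(\<lambda>x y z. (h x y z)^2) = (\<lambda>x y z. P0 x y z + (\<lambda>x y z. Q x y z + R x y z) x y z)"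
        unfolding h_def P0_def Q_def R_def by (intro ext) (simp add: power2_eq_square algebra_simps)
      also have "L \<dots> = L P0 + (L Q + L R)"
        using add[OF P0H H_add[OF QH RH]] add[OF QH RH] by simp
      also have "\<dots> = s^2 * a - 2 * s * b"
      proof -
        have "L Q = (- 2 * s) * b" unfolding Q_def b_def by (rule sm[OF prod[OF q(1) g]])
        moreover have "L R = s^2 * a" unfolding R_def a_def by (rule sm[OF prod[OF g g]])
        moreover have "L P0 = 0" unfolding P0_def by (rule q(2))
        ultimately show ?thesis by simp
      qed
      finally have ineq: "0 \<le> s^2 * a - 2 * s * b" .
      have sb: "b = s * (a + 1)" unfolding s_def using a0 by simp
      have "s^2 * a - 2 * s * b = - (s^2 * (a + 2))" unfolding sb by (simp add: algebra_simps power2_eq_square)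
      with ineq have "s^2 * (a + 2) \<le> 0" by simp
      moreover have "a + 2 > 0" using a0 by simp
      ultimately have "s^2 \<le> 0" by (simp add: mult_le_0_iff)
      then have "s = 0" by simp
      then have "b = 0" using sb by simp
      then show "L (\<lambda>x y z. q x y z * g x y z) = 0" unfolding b_def by simp
    qed
  qed
qed

end
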